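(* Let $F$ be a rooted forest-tuple and $m\in\mathbb{N}$. If $a(F)<m/3$ and $m\ge e(F)$, then $F$ is $m$-suitable.
   Context: A rooted forest is a forest each of whose components contains exactly one designated root. A rooted forest-tuple is a tuple $F=(F_1,\ldots,F_\ell)$ of pairwise vertex-disjoint rooted forests with $e(F_i)>0$ for some $i$; $e(F)=\sum_i e(F_i)$. Define $a(F)=\max_i e(F_i)$, $k(F)=|\{i: e(F_i)=a(F)\}|$, $t(F)=|\{i: e(F_i)>0\}|$. $F$ is suitable if $3a(F)+k(F)-e(F)\le 2$, or if $a(F)=1$ and $t(F)\ge 4$. A rooted forest-tuple $F=(F_1,\dots,F_\ell)$ is a valid subforest of a rooted forest-tuple $G=(G_1,\dots,G_{\ell''})$ if $\ell\le\ell''$, $F_i\subseteq G_i$ for every $i\in[\ell]$, and every root of $F_i$ is a root of $G_i$. $F$ is $m$-suitable if it is a valid subforest of some suitable rooted forest-tuple $G$ with $e(G)=m$. *)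

theory Defs
  imports Complex_Main
begin

text \<open>A rooted forest on vertex type nat is represented as a triple (V, E, R):
  a finite vertex set V, a set E of edges (two-element subsets of V), and a set R of roots.\<close>

type_synonym rforest = "nat set \<times> nat set set \<times> nat set"

definition verts :: "rforest \<Rightarrow> nat set" where "verts F = fst F"
definition edges :: "rforest \<Rightarrow> nat set set" where "edges F = fst (snd F)"
definition roots :: "rforest \<Rightarrow> nat set" where "roots F = snd (snd F)"

definition has_cycle :: "nat set set \<Rightarrow> bool" where
  "has_cycle E \<longleftrightarrow> (\<exists>vs. length vs \<ge> 3 \<and> distinct vs \<and>
      (\<forall>i < length vs. {vs ! i, vs ! ((i + 1) mod length vs)} \<in> E))"

definition connected_in :: "nat set set \<Rightarrow> nat \<Rightarrow> nat \<Rightarrow> bool" where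
  "connected_in E u v \<longleftrightarrow> (u, v) \<in> {(x, y). {x, y} \<in> E}\<^sup>*"

definition is_forest :: "nat set \<Rightarrow> nat set set \<Rightarrow> bool" where
  "is_forest V E \<longleftrightarrow> finite V \<and> (\<forall>e \<in> E. card e = 2 \<and> e \<subseteq> V) \<and> \<not> has_cycle E"

definition rooted_forest :: "rforest \<Rightarrow> bool" where
  "rooted_forest F \<longleftrightarrow> is_forest (verts F) (edges F) \<and> roots F \<subseteq> verts F \<and>
     (\<forall>v \<in> verts F. \<exists>!r. r \<in> roots F \<and> connected_in (edges F) v r)"

definition ne :: "rforest \<Rightarrow> nat" where "ne F = card (edges F)"

definition eT :: "rforest list \<Rightarrow> nat" where "eT F = (\<Sum>i<length F. ne (F ! i))"

definition rooted_forest_tuple :: "rforest list \<Rightarrow> bool" where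
  "rooted_forest_tuple F \<longleftrightarrow> (\<forall>i < length F. rooted_forest (F ! i)) \<and>
     (\<forall>i < length F. \<forall>j < length F. i \<noteq> j \<longrightarrow> verts (F ! i) \<inter> verts (F ! j) = {}) \<and>
     (\<exists>i < length F. ne (F ! i) > 0)"

definition aT :: "rforest list \<Rightarrow> nat" where
  "aT F = Max {ne (F ! i) | i. i < length F}"

definition kT :: "rforest list \<Rightarrow> nat" where
  "kT F = card {i. i < length F \<and> ne (F ! i) = aT F}"

definition tT :: "rforest list \<Rightarrow> nat" where
  "tT F = card {i. i < length F \<and> ne (F ! i) > 0}"

definition suitable :: "rforest list \<Rightarrow> bool" where
  "suitable F \<longleftrightarrow> (3 * int (aT F) + int (kT F) - int (eT F) \<le> 2) \<or> (aT F = 1 \<and> tT F \<ge> 4)"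

definition valid_subforest :: "rforest list \<Rightarrow> rforest list \<Rightarrow> bool" where
  "valid_subforest F G \<longleftrightarrow> rooted_forest_tuple F \<and> rooted_forest_tuple G \<and> length F \<le> length G \<and>
     (\<forall>i < length F. verts (F ! i) \<subseteq> verts (G ! i) \<and> edges (F ! i) \<subseteq> edges (G ! i) \<and>
        roots (F ! i) \<subseteq> roots (G ! i))"

definition m_suitable :: "nat \<Rightarrow> rforest list \<Rightarrow> bool" where
  "m_suitable m F \<longleftrightarrow> (\<exists>G. valid_subforest F G \<and> suitable G \<and> eT G = m)"

end

theory Submission
  imports Defs
begin

definition edgeF :: "nat \<Rightarrow> nat \<Rightarrow> rforest" where
  "edgeF N j = ({N+2*j, N+2*j+1}, {{N+2*j, N+2*j+1}}, {N+2*j})"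

lemma edgeF_simps[simp]:
  "verts (edgeF N j) = {N+2*j, N+2*j+1}" "edges (edgeF N j) = {{N+2*j, N+2*j+1}}"
  "roots (edgeF N j) = {N+2*j}" "ne (edgeF N j) = 1"
  by (auto simp: edgeF_def verts_def edges_def roots_def ne_def)

lemma single_edge_rf:
  assumes xy: "x \<noteq> y"
  shows "rooted_forest ({x,y}, {{x,y}}, {x})"
proof -
  have nc: "\<not> has_cycle {{x,y}}"
  proof
    assume "has_cycle {{x,y}}"
    then obtain vs where l: "length vs \<ge> 3" and d: "distinct vs"
      and c: "\<forall>i < length vs. {vs ! i, vs ! ((i + 1) mod length vs)} \<in> {{x,y}}"
      unfolding has_cycle_def by blast
    have m1: "(0+1) mod length vs = 1" "(1+1) mod length vs = 2" using l by auto
    have "{vs!0, vs!((0+1) mod length vs)} \<in> {{x,y}}" using c l by (metis gr0I not_numeral_le_zero list.size(3))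
    hence "{vs!0, vs!1} = {x,y}" using m1 by simp
    moreover have "{vs!1, vs!((1+1) mod length vs)} \<in> {{x,y}}" using c[rule_format, of 1] l by simp
    hence "{vs!1, vs!2} = {x,y}" using m1 by simp
    ultimately have "{vs!0, vs!1} = {vs!1, vs!2}" by simp
    moreover have "vs!0 \<noteq> vs!2" using d[unfolded distinct_conv_nth, rule_format, of 0 2] l by force
    moreover have "vs!0 \<noteq> vs!1" using d[unfolded distinct_conv_nth, rule_format, of 0 1] l by force
    ultimately show False by (auto simp: doubleton_eq_iff)
  qed
  have cyx: "connected_in {{x,y}} y x"
    unfolding connected_in_def by (rule r_into_rtrancl) (auto simp: insert_commute)
  have cxx: "connected_in {{x,y}} x x" unfolding connected_in_def by simp
  show ?thesis
    unfolding rooted_forest_def is_forest_def verts_def edges_def roots_def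
    using nc xy cyx cxx by auto
qed

lemma rf_edgeF: "rooted_forest (edgeF N j)"
  unfolding edgeF_def by (rule single_edge_rf) simp

lemma eT_sum_list: "eT F = sum_list (map ne F)"
  unfolding eT_def by (simp add: sum_list_sum_nth atLeast0LessThan)

lemma eT_append: "eT (F @ H) = eT F + eT H"
  by (simp add: eT_sum_list)

lemma eT_edges: "eT (map (edgeF N) [0..<d]) = d"
  by (simp add: eT_sum_list comp_def sum_list_triv)

lemma aT_set: "{ne (F ! i) | i. i < length F} = ne ` set F"
  by (auto simp: set_conv_nth)

lemma eT_ge_ka:
  assumes "rooted_forest_tuple F"
  shows "kT F * aT F \<le> eT F"
proof -
  let ?K = "{i. i < length F \<and> ne (F ! i) = aT F}"
  have "kT F * aT F = (\<Sum>i\<in>?K. ne (F!i))" unfolding kT_def by simp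
  also have "\<dots> \<le> (\<Sum>i\<in>{..<length F}. ne (F!i))"
    by (rule sum_mono2) auto
  finally show ?thesis unfolding eT_def .
qed

lemma aT_ge1:
  assumes "rooted_forest_tuple F" shows "aT F \<ge> 1"
proof -
  obtain i where i: "i < length F" "ne (F!i) > 0" using assms unfolding rooted_forest_tuple_def by blast
  have "ne (F!i) \<le> aT F" unfolding aT_def aT_set using i by (intro Max_ge) auto
  thus ?thesis using i by simp
qed

lemma fin_verts:
  assumes "rooted_forest_tuple F" "f \<in> set F" shows "finite (verts f)"
  using assms unfolding rooted_forest_tuple_def rooted_forest_def is_forest_def
  by (metis in_set_conv_nth)

theorem lemma3p9:
  fixes F :: "rforest list" and m :: nat
  assumes "rooted_forest_tuple F"
    and "real (aT F) < real m / 3"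
    and "m \<ge> eT F"
  shows "m_suitable m F"
proof -
  have F: "rooted_forest_tuple F" by fact
  define d where "d = m - eT F"
  define V where "V = \<Union> (verts ` set F)"
  have finV: "finite V" unfolding V_def using fin_verts[OF F] by auto
  define N where "N = Suc (Max (insert 0 V))"
  have VN: "v < N" if "v \<in> V" for v
    unfolding N_def using finV that by (simp add: le_imp_less_Suc)
  define H where "H = map (edgeF N) [0..<d]"
  define G where "G = F @ H"
  have lenH: "length H = d" unfolding H_def by simp
  have Hnth: "H ! j = edgeF N j" if "j < d" for j unfolding H_def using that by simp
  have Gnth1: "G ! i = F ! i" if "i < length F" for i unfolding G_def using that by (simp add: nth_append)
  have Gnth2: "G ! i = edgeF N (i - length F)" if "i \<ge> length F" "i < length G" for i
    unfolding G_def using that lenH Hnth by (simp add: nth_append G_def)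
  have lenG: "length G = length F + d" unfolding G_def using lenH by simp
  have FV: "verts (F!i) \<subseteq> {..<N}" if "i < length F" for i
    using VN that unfolding V_def by (auto dest!: nth_mem)
  have eG: "eT G = m" unfolding G_def H_def eT_append eT_edges d_def using assms(3) by simp
  have rfG: "rooted_forest (G!i)" if "i < length G" for i
    using F that rf_edgeF Gnth1 Gnth2 unfolding rooted_forest_tuple_def by (cases "i < length F") auto
  have disj: "verts (G ! i) \<inter> verts (G ! j) = {}" if "i < length G" "j < length G" "i \<noteq> j" for i j
  proof (cases "i < length F")
    case True
    show ?thesis
    proof (cases "j < length F")
      case True
      then show ?thesis using \<open>i < length F\<close> F that Gnth1 unfolding rooted_forest_tuple_def by auto
    next
      case False
      then show ?thesis using FV[OF \<open>i < length F\<close>] Gnth1[OF \<open>i < length F\<close>] Gnth2[of j] that by auto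
    qed
  next
    case False
    show ?thesis
    proof (cases "j < length F")
      case True
      then show ?thesis using FV[OF True] Gnth1[OF True] Gnth2[of i] False that by auto
    next
      case False
      then show ?thesis using Gnth2[of i] Gnth2[of j] \<open>\<not> i < length F\<close> that by auto
    qed
  qed
  have rftG: "rooted_forest_tuple G"
    unfolding rooted_forest_tuple_def
  proof (intro conjI allI impI)
    show "\<exists>i<length G. 0 < ne (G ! i)"
      using F Gnth1 lenG unfolding rooted_forest_tuple_def by (metis trans_less_add1)
  qed (use rfG disj in auto)
  have valid: "valid_subforest F G"
    unfolding valid_subforest_def using F rftG lenG Gnth1 by auto
  have a1: "aT F \<ge> 1" by (rule aT_ge1[OF F])
  have setG: "ne ` set G = ne ` set F \<union> (if d = 0 then {} else {1})"
    unfolding G_def H_def by (force intro: image_eqI[where x="edgeF N 0"])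
  have finF: "finite (ne ` set F)" by simp
  have neF: "ne ` set F \<noteq> {}" using F unfolding rooted_forest_tuple_def by auto
  have aG: "aT G = aT F"
  proof -
    have "aT G = Max (ne ` set F \<union> (if d = 0 then {} else {1}))" unfolding aT_def aT_set setG ..
    also have "\<dots> = aT F" using a1 finF neF unfolding aT_def aT_set
      by (cases "d = 0") (auto simp: Max_insert max_def)
    finally show ?thesis .
  qed
  have m3: "3 * aT F < m" using assms(2) by linarith
  show ?thesis
    unfolding m_suitable_def
  proof (intro exI conjI)
    show "valid_subforest F G" by (rule valid)
    show "eT G = m" by (rule eG)
    show "suitable G"
    proof (cases "aT F = 1")
      case True
      have le1: "ne (G!i) \<le> 1" if "i < length G" for i
      proof -
        have "ne (G!i) \<le> aT G" unfolding aT_def aT_set using that by (intro Max_ge) auto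
        thus ?thesis using aG True by simp
      qed
      have pt: "ne (G!i) = (if 0 < ne (G!i) then 1 else 0)" if "i < length G" for i
        using le1[OF that] by (cases "ne (G!i)") auto
      have "eT G = (\<Sum>i<length G. if 0 < ne (G!i) then 1 else 0)"
        unfolding eT_def using pt by (intro sum.cong) auto
      also have "\<dots> = tT G" unfolding tT_def
        by (simp add: sum.If_cases lessThan_def Collect_conj_eq[symmetric])
      finally have "tT G = m" using eG by simp
      then show ?thesis unfolding suitable_def using aG True m3 by simp
    next
      case False
      hence a2: "aT F \<ge> 2" using a1 by simp
      have "{i. i < length G \<and> ne (G ! i) = aT G} = {i. i < length F \<and> ne (F ! i) = aT F}"
      proof (intro set_eqI iffI)
        fix i assume "i \<in> {i. i < length G \<and> ne (G ! i) = aT G}"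
        then show "i \<in> {i. i < length F \<and> ne (F ! i) = aT F}"
          using Gnth1 Gnth2[of i] aG a2 by (cases "i < length F") auto
      qed (use Gnth1 aG lenG in auto)
      hence kG: "kT G = kT F" unfolding kT_def by simp
      have ka: "kT F * aT F \<le> eT F" by (rule eT_ge_ka[OF F])
      have "3 * aT F + kT F \<le> m + 2"
      proof (cases "kT F \<le> 3")
        case True then show ?thesis using m3 by simp
      next
        case False
        have "(kT F - 3) * 2 \<le> (kT F - 3) * aT F" using a2 by simp
        hence "kT F * aT F \<ge> 3 * aT F + kT F - 2" using False
          by (simp add: algebra_simps diff_mult_distrib2)
        then show ?thesis using ka assms(3) by linarith
      qed
      then show ?thesis unfolding suitable_def using aG kG eG by simp
    qed
  qed
qed

end
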